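(* If $H$ and $G$ are graphs and $H$ is an immersion of $G$, then $\delta^{\infty}_{\rm e}(H)\leq\delta^{\infty}_{\rm e}(G)$.
   Context: All graphs are finite, undirected, loopless, may have parallel edges. Lifting two edges $ux$ and $xw$ means deleting them and adding an edge $uw$ (nothing added if $u=w$); $H$ is an immersion of $G$ if a graph isomorphic to $H$ can be obtained from a subgraph of $G$ by a sequence of liftings. $\delta^{\infty}_{\rm e}(G)$ (edge-admissibility) is the minimum, over all linear orderings $\langle v_1,\dots,v_n\rangle$ of $V(G)$, of $\max_i\lambda_i$, where $\lambda_i$ is the minimum number of edges of $G$ whose removal destroys every path from $v_i$ to $\{v_1,\dots,v_{i-1}\}$ ($\lambda_1=0$). *)

theory Defs
  imports Main "HOL-Library.Multiset"
begin

text \<open>Finite loopless multigraphs: a vertex set and a multiset of edges, each edge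
  being a 2-element set of vertices (parallel edges = multiplicity > 1).\<close>

record 'a mgraph =
  verts :: "'a set"
  edges :: "'a set multiset"

definition wf_mgraph :: "('a, 'b) mgraph_scheme \<Rightarrow> bool" where
  "wf_mgraph G \<longleftrightarrow> finite (verts G) \<and>
     (\<forall>e \<in># edges G. \<exists>u v. u \<noteq> v \<and> e = {u, v} \<and> u \<in> verts G \<and> v \<in> verts G)"

definition subgraph :: "'a mgraph \<Rightarrow> 'a mgraph \<Rightarrow> bool" where
  "subgraph S G \<longleftrightarrow> verts S \<subseteq> verts G \<and> edges S \<subseteq># edges G \<and>
     (\<forall>e \<in># edges S. e \<subseteq> verts S)"

definition lift_step :: "'a mgraph \<Rightarrow> 'a mgraph \<Rightarrow> bool" where
  "lift_step G G' \<longleftrightarrow> (\<exists>u x w. u \<noteq> x \<and> x \<noteq> w \<and>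
     {#{u, x}, {x, w}#} \<subseteq># edges G \<and>
     G' = \<lparr> verts = verts G,
            edges = edges G - {#{u, x}, {x, w}#} + (if u = w then {#} else {#{u, w}#}) \<rparr>)"

definition mgraph_iso :: "'b mgraph \<Rightarrow> 'a mgraph \<Rightarrow> bool" where
  "mgraph_iso H G \<longleftrightarrow> (\<exists>f. bij_betw f (verts H) (verts G) \<and>
     image_mset (\<lambda>e. f ` e) (edges H) = edges G)"

definition immersion :: "'b mgraph \<Rightarrow> 'a mgraph \<Rightarrow> bool" where
  "immersion H G \<longleftrightarrow> (\<exists>S L. subgraph S G \<and> lift_step\<^sup>*\<^sup>* S L \<and> mgraph_iso H L)"

definition adj :: "'a set multiset \<Rightarrow> 'a \<Rightarrow> 'a \<Rightarrow> bool" where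
  "adj E a b \<longleftrightarrow> {a, b} \<in># E"

definition connects :: "'a set multiset \<Rightarrow> 'a \<Rightarrow> 'a set \<Rightarrow> bool" where
  "connects E v S \<longleftrightarrow> (\<exists>s \<in> S. (adj E)\<^sup>*\<^sup>* v s)"

definition edge_cut :: "'a mgraph \<Rightarrow> 'a \<Rightarrow> 'a set \<Rightarrow> nat" where
  "edge_cut G v S = (LEAST k. \<exists>F. F \<subseteq># edges G \<and> size F = k \<and>
       \<not> connects (edges G - F) v S)"

text \<open>Edge-admissibility: minimum over linear orderings of the maximum lambda_i.\<close>
definition edge_adm :: "'a mgraph \<Rightarrow> nat" where
  "edge_adm G = (LEAST k. \<exists>vs. distinct vs \<and> set vs = verts G \<and>
       (\<forall>i < length vs. edge_cut G (vs ! i) (set (take i vs)) \<le> k))"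

end

theory Submission
  imports Defs
begin

lemma rtc_map:
  assumes "r\<^sup>*\<^sup>* a b" and "\<And>x y. r x y \<Longrightarrow> s\<^sup>*\<^sup>* (h x) (h y)"
  shows "s\<^sup>*\<^sup>* (h a) (h b)"
  using assms(1) by induction (auto intro: rtranclp_trans assms(2))

lemma adj_empty_rtc: "(adj {#})\<^sup>*\<^sup>* a b \<Longrightarrow> a = b"
  by (induction rule: rtranclp.induct) (auto simp: adj_def)

lemma cut_le:
  fixes X :: "'a mgraph" and Y :: "'b mgraph"
  assumes "v' \<notin> B"
    and "\<And>F. F \<subseteq># edges Y \<Longrightarrow> \<not> connects (edges Y - F) v' B \<Longrightarrow>
           \<exists>F'. F' \<subseteq># edges X \<and> size F' \<le> size F \<and> \<not> connects (edges X - F') v A"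
  shows "edge_cut X v A \<le> edge_cut Y v' B"
proof -
  have ex: "\<exists>k F. F \<subseteq># edges Y \<and> size F = k \<and> \<not> connects (edges Y - F) v' B"
  proof (intro exI conjI)
    show "edges Y \<subseteq># edges Y" by simp
    show "\<not> connects (edges Y - edges Y) v' B"
      unfolding connects_def using assms(1) by (auto dest: adj_empty_rtc)
  qed simp
  have "\<exists>F. F \<subseteq># edges Y \<and> size F = edge_cut Y v' B \<and> \<not> connects (edges Y - F) v' B"
    unfolding edge_cut_def using ex by (rule LeastI_ex)
  then obtain F where F: "F \<subseteq># edges Y" "size F = edge_cut Y v' B" "\<not> connects (edges Y - F) v' B"
    by blast
  from assms(2)[OF F(1,3)] obtain F' where F': "F' \<subseteq># edges X" "size F' \<le> size F"
    "\<not> connects (edges X - F') v A" by blast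
  have "edge_cut X v A \<le> size F'"
    unfolding edge_cut_def by (rule Least_le) (use F' in blast)
  with F' F show ?thesis by simp
qed

lemma connects_mono: "E1 \<subseteq># E2 \<Longrightarrow> connects E1 v B \<Longrightarrow> connects E2 v B"
proof -
  assume s: "E1 \<subseteq># E2" and c: "connects E1 v B"
  have "adj E1 \<le> adj E2" using s by (auto simp: adj_def mset_subset_eqD)
  hence "(adj E1)\<^sup>*\<^sup>* \<le> (adj E2)\<^sup>*\<^sup>*" by (rule rtranclp_mono)
  with c show ?thesis unfolding connects_def by blast
qed

lemma target_mono:
  assumes "A \<subseteq> B" "v \<notin> B"
  shows "edge_cut G v A \<le> edge_cut G v B"
  by (rule cut_le[OF assms(2)]) (use assms(1) in \<open>auto simp: connects_def\<close>)

lemma subgraph_cut: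
  assumes "subgraph S G" "v \<notin> B"
  shows "edge_cut S v B \<le> edge_cut G v B"
proof (rule cut_le[OF assms(2)])
  fix F assume F: "F \<subseteq># edges G" "\<not> connects (edges G - F) v B"
  have 1: "edges S - F \<inter># edges S \<subseteq># edges G - F"
    using assms(1) unfolding subgraph_def by (auto simp: subseteq_mset_def intro: diff_le_mono)
  show "\<exists>F'. F' \<subseteq># edges S \<and> size F' \<le> size F \<and> \<not> connects (edges S - F') v B"
  proof (rule exI[of _ "F \<inter># edges S"], intro conjI)
    show "\<not> connects (edges S - F \<inter># edges S) v B" using connects_mono[OF 1] F(2) by blast
  qed (auto intro: size_mset_mono)
qed

lemma L1: "D \<subseteq># E \<Longrightarrow> F \<subseteq># E - D \<Longrightarrow> D \<subseteq># E - F"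
  unfolding subseteq_mset_def
proof
  fix y assume a: "\<forall>y. count D y \<le> count E y" "\<forall>y. count F y \<le> count (E - D) y"
  have "count D y \<le> count E y" "count F y \<le> count E y - count D y" using a by auto
  thus "count D y \<le> count (E - F) y" by simp
qed
lemma L2: "D \<subseteq># E \<Longrightarrow> F \<subseteq># E - D \<Longrightarrow> (E - D + U) - F \<subseteq># (E - F) + U"
  unfolding subseteq_mset_def
proof
  fix y assume a: "\<forall>y. count D y \<le> count E y" "\<forall>y. count F y \<le> count (E - D) y"
  have "count D y \<le> count E y" "count F y \<le> count E y - count D y" using a by auto
  thus "count (E - D + U - F) y \<le> count (E - F + U) y" by simp
qed
lemma L3: "D \<subseteq># E \<Longrightarrow> F \<subseteq># E \<Longrightarrow> F \<inter># D = {#} \<Longrightarrow> F \<subseteq># E - D"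
  unfolding subseteq_mset_def
proof
  fix y assume a: "\<forall>y. count D y \<le> count E y" "\<forall>y. count F y \<le> count E y" "F \<inter># D = {#}"
  have "count (F \<inter># D) y = 0" using a(3) by simp
  hence "min (count F y) (count D y) = 0" by simp
  moreover have "count D y \<le> count E y" "count F y \<le> count E y" using a by auto
  ultimately show "count F y \<le> count (E - D) y" by auto
qed
lemma L4: "F \<subseteq># E \<Longrightarrow> F - D + U \<subseteq># E - D + U"
  unfolding subseteq_mset_def
proof
  fix y assume a: "\<forall>y. count F y \<le> count E y"
  have "count F y \<le> count E y" using a by auto
  thus "count (F - D + U) y \<le> count (E - D + U) y" by simp
qed
lemma L5: "D \<subseteq># E \<Longrightarrow> (E - D + U) - (F - D + U) \<subseteq># E - F"
  unfolding subseteq_mset_def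
proof
  fix y assume a: "\<forall>y. count D y \<le> count E y"
  have "count D y \<le> count E y" using a by auto
  thus "count (E - D + U - (F - D + U)) y \<le> count (E - F) y" by simp
qed

lemma lift_cut:
  assumes "lift_step G G'" "v \<notin> B"
  shows "edge_cut G' v B \<le> edge_cut G v B"
proof (rule cut_le[OF assms(2)])
  fix F assume F: "F \<subseteq># edges G" "\<not> connects (edges G - F) v B"
  obtain u x w where uxw: "u \<noteq> x" "x \<noteq> w" "{#{u, x}, {x, w}#} \<subseteq># edges G"
    "G' = \<lparr> verts = verts G,
            edges = edges G - {#{u, x}, {x, w}#} + (if u = w then {#} else {#{u, w}#}) \<rparr>"
    using assms(1) unfolding lift_step_def by blast
  define D where "D = {#{u, x}, {x, w}#}"
  define U :: "'a set multiset" where "U = (if u = w then {#} else {#{u, w}#})"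
  define E where "E = edges G"
  have DE: "D \<subseteq># E" using uxw D_def E_def by simp
  have E': "edges G' = E - D + U" using uxw D_def U_def E_def by simp
  show "\<exists>F'. F' \<subseteq># edges G' \<and> size F' \<le> size F \<and> \<not> connects (edges G' - F') v B"
  proof (cases "F \<subseteq># E - D")
    case True
    have sub: "F \<subseteq># edges G'" by (metis E' True mset_subset_eq_add_left subset_mset.order_trans)
    have DEF: "D \<subseteq># E - F" using L1[OF DE True] .
    have ux: "adj (E - F) u x" and xw: "adj (E - F) x w"
      using DEF D_def by (auto simp: adj_def mset_subset_eqD)
    have step: "(adj (E - F))\<^sup>*\<^sup>* a b" if "adj (edges G' - F) a b" for a b
    proof (cases "{a, b} \<in># E - F")
      case True thus ?thesis by (auto simp: adj_def)
    next
      case False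
      have "edges G' - F \<subseteq># (E - F) + U" using E' L2[OF DE True] by simp
      hence "{a,b} \<in># (E - F) + U" using that unfolding adj_def by (meson mset_subset_eqD)
      with False have "{a,b} = {u,w}" by (auto simp: U_def split: if_splits)
      hence "(a = u \<and> b = w) \<or> (a = w \<and> b = u)" by (auto simp: doubleton_eq_iff)
      moreover have "adj (E - F) x u" "adj (E - F) w x" using ux xw by (auto simp: adj_def insert_commute)
      ultimately show ?thesis using ux xw
        by (meson converse_rtranclp_into_rtranclp r_into_rtranclp)
    qed
    have "\<not> connects (edges G' - F) v B"
    proof
      assume "connects (edges G' - F) v B"
      then obtain s where "s \<in> B" "(adj (edges G' - F))\<^sup>*\<^sup>* v s" unfolding connects_def by blast
      hence "(adj (E - F))\<^sup>*\<^sup>* v s" using rtc_map[where h=id] step by (metis id_apply)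
      with \<open>s \<in> B\<close> F(2) E_def show False unfolding connects_def by blast
    qed
    thus ?thesis using sub by blast
  next
    case False
    define F' where "F' = F - D + U"
    have int: "F \<inter># D \<noteq> {#}"
    proof
      assume "F \<inter># D = {#}"
      with F(1) DE E_def have "F \<subseteq># E - D" using L3 by blast
      with False show False by simp
    qed
    have "size (F \<inter># D) > 0" using int by (simp add: nonempty_has_size)
    moreover have "size (F \<inter># D) \<le> size F" by (simp add: size_mset_mono)
    ultimately have "size (F - D) < size F" by (simp add: size_Diff_subset_Int)
    moreover have "size U \<le> 1" by (simp add: U_def)
    ultimately have sz: "size F' \<le> size F" by (simp add: F'_def)
    have sub: "F' \<subseteq># edges G'" using E' F(1) E_def L4 F'_def by simp
    have sub2: "edges G' - F' \<subseteq># E - F" using E' L5[OF DE] F'_def by simp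
    have "\<not> connects (edges G' - F') v B"
      using connects_mono[OF sub2] F(2) E_def by blast
    thus ?thesis using sub sz by blast
  qed
qed

lemma lifts_cut:
  assumes "lift_step\<^sup>*\<^sup>* S L"
  shows "verts L = verts S \<and> (\<forall>v B. v \<notin> B \<longrightarrow> edge_cut L v B \<le> edge_cut S v B)"
  using assms
proof induction
  case base then show ?case by simp
next
  case (step y z)
  have "verts z = verts y" using step(2) unfolding lift_step_def by auto
  then show ?case using step lift_cut by (metis le_trans)
qed

lemma iso_cut:
  fixes H :: "'b mgraph" and L :: "'a mgraph"
  assumes wf: "wf_mgraph H" and bij: "bij_betw f (verts H) (verts L)"
    and im: "image_mset (\<lambda>e. f ` e) (edges H) = edges L"
    and v: "v \<in> verts H" and A: "A \<subseteq> verts H" and nv: "f v \<notin> f ` A"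
  shows "edge_cut H v A \<le> edge_cut L (f v) (f ` A)"
proof (rule cut_le[OF nv])
  fix F assume F: "F \<subseteq># edges L" "\<not> connects (edges L - F) (f v) (f ` A)"
  define g where "g = inv_into (verts H) f"
  have inj: "inj_on f (verts H)" using bij bij_betw_def by blast
  have eH: "e \<subseteq> verts H" if "e \<in># edges H" for e
  proof -
    have "\<exists>u v. u \<noteq> v \<and> e = {u, v} \<and> u \<in> verts H \<and> v \<in> verts H"
      using wf that unfolding wf_mgraph_def by (elim conjE ballE) auto
    thus ?thesis by auto
  qed
  have gf: "g ` f ` e = e" if "e \<in># edges H" for e
  proof -
    have "g ` f ` e = (\<lambda>y. g (f y)) ` e" by (simp add: image_image)
    also have "\<dots> = id ` e"
    proof (rule image_cong)
      fix y assume "y \<in> e"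
      hence "y \<in> verts H" using eH[OF that] by blast
      thus "g (f y) = id y" unfolding g_def using inj by (simp add: inv_into_f_f)
    qed simp
    finally show ?thesis by simp
  qed
  define FH where "FH = image_mset (\<lambda>e. g ` e) F"
  have gL: "image_mset (\<lambda>e. g ` e) (edges L) = edges H"
  proof -
    have "image_mset (\<lambda>e. g ` e) (edges L) = image_mset (\<lambda>e. g ` f ` e) (edges H)"
      unfolding im[symmetric] by (simp add: multiset.map_comp comp_def)
    also have "\<dots> = image_mset id (edges H)" by (rule image_mset_cong) (simp add: gf)
    finally show ?thesis by simp
  qed
  have FHsub: "FH \<subseteq># edges H"
    using image_mset_subseteq_mono[OF F(1), of "\<lambda>e. g ` e"] unfolding FH_def gL .
  have fFH: "image_mset (\<lambda>e. f ` e) FH = F"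
  proof -
    have "image_mset (\<lambda>e. f ` e) FH = image_mset (\<lambda>e. f ` g ` e) F"
      by (simp add: FH_def multiset.map_comp comp_def)
    also have "\<dots> = image_mset id F"
    proof (rule image_mset_cong)
      fix e assume "e \<in># F"
      hence "e \<in># edges L" by (rule mset_subset_eqD[OF F(1)])
      hence "e \<in> (\<lambda>e. f ` e) ` set_mset (edges H)" unfolding im[symmetric] set_image_mset .
      then obtain e0 where "e0 \<in># edges H" "e = f ` e0" by blast
      thus "f ` g ` e = id e" using gf by simp
    qed
    finally show ?thesis by simp
  qed
  have diff: "image_mset (\<lambda>e. f ` e) (edges H - FH) = edges L - F"
    unfolding image_mset_Diff[OF FHsub] im fFH ..
  have step: "(adj (edges L - F))\<^sup>*\<^sup>* (f a) (f b)" if "adj (edges H - FH) a b" for a b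
  proof -
    have "{a, b} \<in># edges H - FH" using that unfolding adj_def .
    hence "f ` {a, b} \<in> (\<lambda>e. f ` e) ` set_mset (edges H - FH)" by (rule imageI)
    hence "f ` {a, b} \<in># edges L - F" unfolding diff[symmetric] set_image_mset .
    hence "adj (edges L - F) (f a) (f b)" unfolding adj_def by simp
    thus ?thesis by (rule r_into_rtranclp)
  qed
  have "\<not> connects (edges H - FH) v A"
  proof
    assume "connects (edges H - FH) v A"
    then obtain s where s: "s \<in> A" "(adj (edges H - FH))\<^sup>*\<^sup>* v s" unfolding connects_def by blast
    have "(adj (edges L - F))\<^sup>*\<^sup>* (f v) (f s)" by (rule rtc_map[OF s(2) step])
    with s(1) F(2) show False unfolding connects_def by blast
  qed
  moreover have "size FH \<le> size F" by (simp add: FH_def)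
  ultimately show "\<exists>F'. F' \<subseteq># edges H \<and> size F' \<le> size F \<and> \<not> connects (edges H - F') v A"
    using FHsub by blast
qed

lemma filter_take:
  "i < length (filter P vs) \<Longrightarrow> \<exists>j < length vs. vs ! j = filter P vs ! i \<and>
     set (take i (filter P vs)) \<subseteq> set (take j vs)"
proof (induction vs arbitrary: i)
  case Nil then show ?case by simp
next
  case (Cons x xs)
  show ?case
  proof (cases "P x")
    case True
    show ?thesis
    proof (cases i)
      case 0 then show ?thesis using True by (intro exI[of _ 0]) auto
    next
      case (Suc i')
      with Cons.prems True have "i' < length (filter P xs)" by simp
      from Cons.IH[OF this] obtain j where "j < length xs" "xs ! j = filter P xs ! i'"
        "set (take i' (filter P xs)) \<subseteq> set (take j xs)" by blast
      then show ?thesis using True Suc by (intro exI[of _ "Suc j"]) auto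
    qed
  next
    case False
    with Cons.prems have "i < length (filter P xs)" by simp
    from Cons.IH[OF this] obtain j where "j < length xs" "xs ! j = filter P xs ! i"
      "set (take i (filter P xs)) \<subseteq> set (take j xs)" by blast
    then show ?thesis using False by (intro exI[of _ "Suc j"]) (auto intro: set_take_subset_set_take[THEN subsetD, rotated])
  qed
qed

lemma nth_notin_take: "distinct xs \<Longrightarrow> i < length xs \<Longrightarrow> xs ! i \<notin> set (take i xs)"
  by (metis Cons_nth_drop_Suc append_take_drop_id disjoint_iff distinct_append list.set_intros(1))

theorem mainTheorem11:
  fixes H :: "'b mgraph" and G :: "'a mgraph"
  assumes "wf_mgraph H" and "wf_mgraph G" and "immersion H G"
  shows "edge_adm H \<le> edge_adm G"
proof -
  obtain S L where SL: "subgraph S G" "lift_step\<^sup>*\<^sup>* S L" "mgraph_iso H L"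
    using assms(3) unfolding immersion_def by blast
  obtain f where f: "bij_betw f (verts H) (verts L)" "image_mset (\<lambda>e. f ` e) (edges H) = edges L"
    using SL(3) unfolding mgraph_iso_def by blast
  have LS: "verts L = verts S" and liftc: "\<And>v B. v \<notin> B \<Longrightarrow> edge_cut L v B \<le> edge_cut S v B"
    using lifts_cut[OF SL(2)] by auto
  obtain vs0 where vs0: "distinct vs0" "set vs0 = verts G"
  proof -
    have "finite (verts G)" using assms(2) unfolding wf_mgraph_def by (rule conjunct1)
    from finite_distinct_list[OF this] show ?thesis using that by blast
  qed
  have "\<exists>k vs. distinct vs \<and> set vs = verts G \<and>
       (\<forall>i < length vs. edge_cut G (vs ! i) (set (take i vs)) \<le> k)"
  proof (intro exI conjI)
    show "\<forall>i < length vs0. edge_cut G (vs0 ! i) (set (take i vs0))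
           \<le> (\<Sum>i<length vs0. edge_cut G (vs0 ! i) (set (take i vs0)))"
      by (auto intro: member_le_sum)
  qed (use vs0 in auto)
  hence "\<exists>vs. distinct vs \<and> set vs = verts G \<and>
       (\<forall>i < length vs. edge_cut G (vs ! i) (set (take i vs)) \<le> edge_adm G)"
    unfolding edge_adm_def by (rule LeastI_ex)
  then obtain vs where vs: "distinct vs" "set vs = verts G"
    "\<And>i. i < length vs \<Longrightarrow> edge_cut G (vs ! i) (set (take i vs)) \<le> edge_adm G" by blast
  define g where "g = inv_into (verts H) f"
  have gbij: "bij_betw g (verts L) (verts H)" using f(1) g_def bij_betw_inv_into by blast
  have fg: "\<And>y. y \<in> verts L \<Longrightarrow> f (g y) = y" using f(1) g_def
    by (simp add: bij_betw_inv_into_right)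
  define vsS where "vsS = filter (\<lambda>x. x \<in> verts S) vs"
  define hs where "hs = map g vsS"
  have vsSd: "distinct vsS" using vs vsS_def by simp
  have vsSs: "set vsS = verts L" using vs vsS_def LS SL(1) unfolding subgraph_def by auto
  have hsd: "distinct hs" unfolding hs_def using vsSd vsSs gbij
    by (simp add: distinct_map bij_betw_def)
  have hss: "set hs = verts H" unfolding hs_def using vsSs gbij by (simp add: bij_betw_def)
  have bound: "edge_cut H (hs ! i) (set (take i hs)) \<le> edge_adm G" if i: "i < length hs" for i
  proof -
    have iS: "i < length vsS" using i hs_def by simp
    define a where "a = vsS ! i"
    define A where "A = set (take i vsS)"
    obtain j where j: "j < length vs" "vs ! j = a" "A \<subseteq> set (take j vs)"
      using filter_take[OF iS[unfolded vsS_def]] a_def A_def vsS_def by blast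
    have aA: "a \<notin> A" using nth_notin_take[OF vsSd iS] a_def A_def by simp
    have aB: "a \<notin> set (take j vs)" using nth_notin_take[OF vs(1) j(1)] j(2) by simp
    have aL: "a \<in> verts L" unfolding a_def vsSs[symmetric] by (rule nth_mem[OF iS])
    have AL: "A \<subseteq> verts L" using vsSs A_def by (auto dest: in_set_takeD)
    have ga: "g a \<in> verts H" using aL gbij bij_betwE by blast
    have gA: "g ` A \<subseteq> verts H" using AL gbij bij_betwE by blast
    have fgA: "f ` g ` A = A" using AL fg by (force simp: image_image)
    have "edge_cut H (g a) (g ` A) \<le> edge_cut L (f (g a)) (f ` g ` A)"
      by (rule iso_cut[OF assms(1) f ga gA]) (use fg aL fgA aA in simp)
    also have "\<dots> = edge_cut L a A" using fg aL fgA by simp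
    also have "\<dots> \<le> edge_cut S a A" by (rule liftc[OF aA])
    also have "\<dots> \<le> edge_cut G a A" by (rule subgraph_cut[OF SL(1) aA])
    also have "\<dots> \<le> edge_cut G a (set (take j vs))" by (rule target_mono[OF j(3) aB])
    also have "\<dots> \<le> edge_adm G" using vs(3)[OF j(1)] j(2) by simp
    finally show ?thesis using iS unfolding hs_def a_def A_def by (simp add: take_map)
  qed
  show ?thesis unfolding edge_adm_def[of H]
  proof (rule Least_le)
    show "\<exists>vs. distinct vs \<and> set vs = verts H \<and>
       (\<forall>i < length vs. edge_cut H (vs ! i) (set (take i vs)) \<le> edge_adm G)"
      by (rule exI[of _ hs]) (simp add: hsd hss bound)
  qed
qed

end
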